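(* Assume Condition (T) (see context) and let $(\mathbf W_t)_{t\in\mathbb Z}$ be the stationary solution of $\mathbf W_t=\mathbf A_t\mathbf W_{t-1}+\mathbf B_t$. For any $\ell\le d$ and $s\in\mathbb N$, let $Q_F(s)=\sum_{n=0}^{s-1}\Pi^{(\ell)}_nD_{\ell,-n}$. Then $Q_F(s)=Q_W(s)+Q_B(s)$ a.s., where $$Q_W(s)=\sum_{j:\,\ell\vartriangleleft j}\pi_{\ell j}(s)W_{j,-s},\qquad Q_B(s)=\sum_{n=0}^{s-1}\Pi^{(\ell)}_n\Big(B_{\ell,-n}+\sum_{j:\,\ell\vartriangleleft j}\ \sum_{m=1}^{s-n-1}\pi'_{\ell j}(-n,-n-m+1)B_{j,-n-m}\Big).$$ Moreover $\mathbb E\,Q_B(s)^{\widetilde\alpha_\ell}<\infty$.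
   Context: $(\mathbf A_t,\mathbf B_t)_{t\in\mathbb Z}$ is an i.i.d. sequence of copies of $(\mathbf A,\mathbf B)$, a random $d\times d$ matrix and random vector in $\mathbb R^d$, entries $A_{ij,t}$, $B_{i,t}$. Condition (T): (T-1) $\mathbf A\ge 0$, $\mathbf B\ge 0$ entrywise a.s.; (T-2) $\mathbb P(B_i=0)<1$; (T-3) $\mathbb P(A_{ij}=0)=1$ whenever $i>j$; (T-4) there exist $\alpha_1,\dots,\alpha_d>0$, pairwise distinct, with $\mathbb E A_{ii}^{\alpha_i}=1$; (T-5) $\mathbb E A_{ij}^{\alpha_i}<\infty$; (T-6) $\mathbb E B_i^{\alpha_i}<\infty$; (T-7) $\mathbb E[A_{ii}^{\alpha_i}\log^+A_{ii}]<\infty$; (T-8) the law of $\log A_{ii}$ given $\{A_{ii}>0\}$ is non-arithmetic. Under (T) the stationary solution $\mathbf W_t=(W_{1,t},\dots,W_{d,t})$ exists and is unique. Relations: $i\preccurlyeq j$ if $\mathbb P(A_{ij}>0)>0$; $i\prec j$ if $i\preccurlyeq j$, $i\ne j$; $i\trianglelefteq j$ if there is a chain $i=i(0)\preccurlyeq i(1)\preccurlyeq\dots\preccurlyeq i(m)=j$ ($m\ge 0$); $i\vartriangleleft j$ if $i\trianglelefteq j$ and $i\neq j$; $\widetilde\alpha_i=\min\{\alpha_j:i\trianglelefteq j\}$. Notation: $\Pi^{(\ell)}_n=A_{\ell\ell,0}\cdots A_{\ell\ell,-n+1}$, $\Pi^{(\ell)}_0=1$; $D_{\ell,t}=\sum_{j:\ell\prec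 j}A_{\ell j,t}W_{j,t-1}+B_{\ell,t}$. For $m\ge1$ let $H_m(i,j)$ be the set of sequences $(h(0),\dots,h(m))$ with $h(0)=i$, $h(m)=j$, $h(k)\preccurlyeq h(k+1)$ for all $k$, and $H'_m(i,j)=\{h\in H_m(i,j): h(1)\neq i\}$. Set $\pi_{ij}(s)=\sum_{h\in H_s(i,j)}\prod_{p=0}^{s-1}A_{h(p)h(p+1),-p}$ (the $(i,j)$ entry of $\mathbf A_0\mathbf A_{-1}\cdots\mathbf A_{-s+1}$) and $\pi'_{\ell j}(-n,-n-m+1)=\sum_{h\in H'_m(\ell,j)}\prod_{p=0}^{m-1}A_{h(p)h(p+1),-n-p}$. *)

theory Defs
  imports "HOL-Probability.Probability"
begin

text \<open>Conventions: time index t :: int, omega :: 'a, coordinates i, j :: nat in {1..d}.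
  A t omega i j is the (i,j) entry of A_t, B t omega i the i-th entry of B_t,
  W t omega i the i-th entry of W_t.  The generic copy (A,B) is (A_0,B_0).\<close>

definition idx :: "nat \<Rightarrow> ((nat \<times> nat) + nat) set" where
  "idx d = Inl ` ({1..d} \<times> {1..d}) \<union> Inr ` {1..d}"

definition ABvec :: "nat \<Rightarrow> (int \<Rightarrow> 'a \<Rightarrow> nat \<Rightarrow> nat \<Rightarrow> real) \<Rightarrow> (int \<Rightarrow> 'a \<Rightarrow> nat \<Rightarrow> real)
     \<Rightarrow> int \<Rightarrow> 'a \<Rightarrow> ((nat \<times> nat) + nat) \<Rightarrow> real" where
  "ABvec d A B t \<omega> = restrict (\<lambda>k. case k of Inl (i, j) \<Rightarrow> A t \<omega> i j | Inr i \<Rightarrow> B t \<omega> i) (idx d)"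

definition iid_AB :: "'a measure \<Rightarrow> nat \<Rightarrow> (int \<Rightarrow> 'a \<Rightarrow> nat \<Rightarrow> nat \<Rightarrow> real) \<Rightarrow> (int \<Rightarrow> 'a \<Rightarrow> nat \<Rightarrow> real) \<Rightarrow> bool" where
  "iid_AB M d A B \<longleftrightarrow>
     prob_space.indep_vars M (\<lambda>_. PiM (idx d) (\<lambda>_. borel)) (ABvec d A B) UNIV \<and>
     (\<forall>t. distr M (PiM (idx d) (\<lambda>_. borel)) (ABvec d A B t) = distr M (PiM (idx d) (\<lambda>_. borel)) (ABvec d A B 0))"

definition stationary_proc :: "'a measure \<Rightarrow> nat \<Rightarrow> (int \<Rightarrow> 'a \<Rightarrow> nat \<Rightarrow> real) \<Rightarrow> bool" where
  "stationary_proc M d W \<longleftrightarrow>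
     (\<forall>T :: int set. finite T \<longrightarrow> (\<forall>h :: int.
        distr M (PiM (T \<times> {1..d}) (\<lambda>_. borel)) (\<lambda>\<omega>. \<lambda>(t, i)\<in>T \<times> {1..d}. W (t + h) \<omega> i)
      = distr M (PiM (T \<times> {1..d}) (\<lambda>_. borel)) (\<lambda>\<omega>. \<lambda>(t, i)\<in>T \<times> {1..d}. W t \<omega> i)))"

definition nonarithmetic_log :: "'a measure \<Rightarrow> ('a \<Rightarrow> real) \<Rightarrow> bool" where
  "nonarithmetic_log M X \<longleftrightarrow>
     \<not> (\<exists>h>0. AE \<omega> in M. X \<omega> > 0 \<longrightarrow> ln (X \<omega>) \<in> range (\<lambda>k::int. h * of_int k))"

definition condT :: "'a measure \<Rightarrow> nat \<Rightarrow> (int \<Rightarrow> 'a \<Rightarrow> nat \<Rightarrow> nat \<Rightarrow> real) \<Rightarrow> (int \<Rightarrow> 'a \<Rightarrow> nat \<Rightarrow> real)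
     \<Rightarrow> (nat \<Rightarrow> real) \<Rightarrow> bool" where
  "condT M d A B \<alpha> \<longleftrightarrow>
     (AE \<omega> in M. \<forall>i\<in>{1..d}. B 0 \<omega> i \<ge> 0 \<and> (\<forall>j\<in>{1..d}. A 0 \<omega> i j \<ge> 0)) \<and>
     (\<forall>i\<in>{1..d}. measure M {\<omega>\<in>space M. B 0 \<omega> i = 0} < 1) \<and>
     (\<forall>i\<in>{1..d}. \<forall>j\<in>{1..d}. i > j \<longrightarrow> measure M {\<omega>\<in>space M. A 0 \<omega> i j = 0} = 1) \<and>
     (\<forall>i\<in>{1..d}. \<alpha> i > 0) \<and> inj_on \<alpha> {1..d} \<and>
     (\<forall>i\<in>{1..d}. (\<integral>\<^sup>+ \<omega>. ennreal (A 0 \<omega> i i powr \<alpha> i) \<partial>M) = 1) \<and>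
     (\<forall>i\<in>{1..d}. \<forall>j\<in>{1..d}. (\<integral>\<^sup>+ \<omega>. ennreal (A 0 \<omega> i j powr \<alpha> i) \<partial>M) < \<infinity>) \<and>
     (\<forall>i\<in>{1..d}. (\<integral>\<^sup>+ \<omega>. ennreal (B 0 \<omega> i powr \<alpha> i) \<partial>M) < \<infinity>) \<and>
     (\<forall>i\<in>{1..d}. (\<integral>\<^sup>+ \<omega>. ennreal (A 0 \<omega> i i powr \<alpha> i * max 0 (ln (A 0 \<omega> i i))) \<partial>M) < \<infinity>) \<and>
     (\<forall>i\<in>{1..d}. nonarithmetic_log M (\<lambda>\<omega>. A 0 \<omega> i i))"

definition prec :: "'a measure \<Rightarrow> (int \<Rightarrow> 'a \<Rightarrow> nat \<Rightarrow> nat \<Rightarrow> real) \<Rightarrow> nat \<Rightarrow> nat \<Rightarrow> bool" where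
  "prec M A i j \<longleftrightarrow> measure M {\<omega>\<in>space M. A 0 \<omega> i j > 0} > 0"

definition trile :: "'a measure \<Rightarrow> nat \<Rightarrow> (int \<Rightarrow> 'a \<Rightarrow> nat \<Rightarrow> nat \<Rightarrow> real) \<Rightarrow> nat \<Rightarrow> nat \<Rightarrow> bool" where
  "trile M d A = (\<lambda>i j. i \<in> {1..d} \<and> j \<in> {1..d} \<and> prec M A i j)\<^sup>*\<^sup>*"

definition trilt :: "'a measure \<Rightarrow> nat \<Rightarrow> (int \<Rightarrow> 'a \<Rightarrow> nat \<Rightarrow> nat \<Rightarrow> real) \<Rightarrow> nat \<Rightarrow> nat \<Rightarrow> bool" where
  "trilt M d A i j \<longleftrightarrow> trile M d A i j \<and> i \<noteq> j"

definition alpha_tilde :: "'a measure \<Rightarrow> nat \<Rightarrow> (int \<Rightarrow> 'a \<Rightarrow> nat \<Rightarrow> nat \<Rightarrow> real) \<Rightarrow> (nat \<Rightarrow> real) \<Rightarrow> nat \<Rightarrow> real" where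
  "alpha_tilde M d A \<alpha> i = Min (\<alpha> ` {j\<in>{1..d}. trile M d A i j})"

definition Pil :: "(int \<Rightarrow> 'a \<Rightarrow> nat \<Rightarrow> nat \<Rightarrow> real) \<Rightarrow> nat \<Rightarrow> nat \<Rightarrow> 'a \<Rightarrow> real" where
  "Pil A l n \<omega> = (\<Prod>k<n. A (- int k) \<omega> l l)"

definition Dl :: "'a measure \<Rightarrow> nat \<Rightarrow> (int \<Rightarrow> 'a \<Rightarrow> nat \<Rightarrow> nat \<Rightarrow> real) \<Rightarrow> (int \<Rightarrow> 'a \<Rightarrow> nat \<Rightarrow> real)
     \<Rightarrow> (int \<Rightarrow> 'a \<Rightarrow> nat \<Rightarrow> real) \<Rightarrow> nat \<Rightarrow> int \<Rightarrow> 'a \<Rightarrow> real" where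
  "Dl M d A B W l t \<omega> =
     (\<Sum>j\<in>{j\<in>{1..d}. prec M A l j \<and> l \<noteq> j}. A t \<omega> l j * W (t - 1) \<omega> j) + B t \<omega> l"

definition Hpaths :: "'a measure \<Rightarrow> nat \<Rightarrow> (int \<Rightarrow> 'a \<Rightarrow> nat \<Rightarrow> nat \<Rightarrow> real) \<Rightarrow> nat \<Rightarrow> nat \<Rightarrow> nat \<Rightarrow> (nat \<Rightarrow> nat) set" where
  "Hpaths M d A m i j = {h \<in> {0..m} \<rightarrow>\<^sub>E {1..d}. h 0 = i \<and> h m = j \<and> (\<forall>k<m. prec M A (h k) (h (Suc k)))}"

definition Hpaths' :: "'a measure \<Rightarrow> nat \<Rightarrow> (int \<Rightarrow> 'a \<Rightarrow> nat \<Rightarrow> nat \<Rightarrow> real) \<Rightarrow> nat \<Rightarrow> nat \<Rightarrow> nat \<Rightarrow> (nat \<Rightarrow> nat) set" where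
  "Hpaths' M d A m i j = {h \<in> Hpaths M d A m i j. h 1 \<noteq> i}"

definition pis :: "'a measure \<Rightarrow> nat \<Rightarrow> (int \<Rightarrow> 'a \<Rightarrow> nat \<Rightarrow> nat \<Rightarrow> real) \<Rightarrow> nat \<Rightarrow> nat \<Rightarrow> nat \<Rightarrow> 'a \<Rightarrow> real" where
  "pis M d A i j s \<omega> = (\<Sum>h\<in>Hpaths M d A s i j. \<Prod>p<s. A (- int p) \<omega> (h p) (h (Suc p)))"

text \<open>pis' M d A i j n m = \<pi>'_{ij}(-n, -n-m+1)\<close>
definition pis' :: "'a measure \<Rightarrow> nat \<Rightarrow> (int \<Rightarrow> 'a \<Rightarrow> nat \<Rightarrow> nat \<Rightarrow> real) \<Rightarrow> nat \<Rightarrow> nat \<Rightarrow> nat \<Rightarrow> nat \<Rightarrow> 'a \<Rightarrow> real" where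
  "pis' M d A i j n m \<omega> = (\<Sum>h\<in>Hpaths' M d A m i j. \<Prod>p<m. A (- int n - int p) \<omega> (h p) (h (Suc p)))"

definition QF where
  "QF M d A B W l s \<omega> = (\<Sum>n<s. Pil A l n \<omega> * Dl M d A B W l (- int n) \<omega>)"

definition QW where
  "QW M d A W l s \<omega> = (\<Sum>j\<in>{j\<in>{1..d}. trilt M d A l j}. pis M d A l j s \<omega> * W (- int s) \<omega> j)"

definition QB where
  "QB M d A B l s \<omega> = (\<Sum>n<s. Pil A l n \<omega> *
      (B (- int n) \<omega> l + (\<Sum>j\<in>{j\<in>{1..d}. trilt M d A l j}. \<Sum>m\<in>{1..s - n - 1}.
          pis' M d A l j n m \<omega> * B (- int n - int m) \<omega> j)))"

end

theory Submission
  imports Defs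
begin

definition Am :: "'a measure \<Rightarrow> (int \<Rightarrow> 'a \<Rightarrow> nat \<Rightarrow> nat \<Rightarrow> real) \<Rightarrow> int \<Rightarrow> 'a \<Rightarrow> nat \<Rightarrow> nat \<Rightarrow> real" where
  "Am M A t \<omega> i k = (if prec M A i k then A t \<omega> i k else 0)"

fun Rm :: "'a measure \<Rightarrow> nat \<Rightarrow> (int \<Rightarrow> 'a \<Rightarrow> nat \<Rightarrow> nat \<Rightarrow> real) \<Rightarrow> 'a \<Rightarrow> int \<Rightarrow> nat \<Rightarrow> nat \<Rightarrow> nat \<Rightarrow> real" where
  "Rm M d A \<omega> \<tau> 0 i j = (if i = j then 1 else 0)"
| "Rm M d A \<omega> \<tau> (Suc m) i j = (\<Sum>k\<in>{1..d}. Am M A \<tau> \<omega> i k * Rm M d A \<omega> (\<tau> - 1) m k j)"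

definition pcons :: "nat \<Rightarrow> nat \<Rightarrow> (nat \<Rightarrow> nat) \<Rightarrow> nat \<Rightarrow> nat" where
  "pcons m i g = (\<lambda>p\<in>{0..Suc m}. if p = 0 then i else g (p - 1))"

lemma finite_Hpaths: "finite (Hpaths M d A m i j)"
proof -
  have "Hpaths M d A m i j \<subseteq> {0..m} \<rightarrow>\<^sub>E {1..d}" by (auto simp: Hpaths_def)
  then show ?thesis by (rule finite_subset) (intro finite_PiE, auto)
qed

lemma Hsplit:
  assumes "i \<in> {1..d}"
  shows "{h\<in>Hpaths M d A (Suc m) i j. Q (h 1)} =
     pcons m i ` (\<Union>k\<in>{k\<in>{1..d}. prec M A i k \<and> Q k}. Hpaths M d A m k j)"
proof (intro equalityI subsetI)
  fix h assume h: "h \<in> {h\<in>Hpaths M d A (Suc m) i j. Q (h 1)}"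
  define g where "g = (\<lambda>p\<in>{0..m}. h (Suc p))"
  have hE: "h \<in> {0..Suc m} \<rightarrow>\<^sub>E {1..d}" and h0: "h 0 = i" and hm: "h (Suc m) = j"
    and hp: "\<forall>k<Suc m. prec M A (h k) (h (Suc k))" and hQ: "Q (h 1)"
    using h by (auto simp: Hpaths_def)
  have "g \<in> Hpaths M d A m (h 1) j"
    unfolding Hpaths_def g_def using hE hm hp by auto
  moreover have "h 1 \<in> {1..d}" "prec M A i (h 1)" using hE hp h0 by auto
  moreover have "h = pcons m i g"
  proof
    fix p show "h p = pcons m i g p"
      using hE h0 by (cases p) (auto simp: pcons_def g_def PiE_def extensional_def)
  qed
  ultimately show "h \<in> pcons m i ` (\<Union>k\<in>{k\<in>{1..d}. prec M A i k \<and> Q k}. Hpaths M d A m k j)"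
    using hQ by blast
next
  fix h assume "h \<in> pcons m i ` (\<Union>k\<in>{k\<in>{1..d}. prec M A i k \<and> Q k}. Hpaths M d A m k j)"
  then obtain k g where k: "k \<in> {1..d}" "prec M A i k" "Q k" and g: "g \<in> Hpaths M d A m k j"
    and hg: "h = pcons m i g" by auto
  have gE: "g \<in> {0..m} \<rightarrow>\<^sub>E {1..d}" and g0: "g 0 = k" and gm: "g m = j"
    and gp: "\<forall>q<m. prec M A (g q) (g (Suc q))" using g by (auto simp: Hpaths_def)
  have "h \<in> {0..Suc m} \<rightarrow>\<^sub>E {1..d}" using gE assms unfolding hg pcons_def by auto
  moreover have "\<forall>q<Suc m. prec M A (h q) (h (Suc q))"
  proof (intro allI impI)
    fix q assume "q < Suc m"
    then show "prec M A (h q) (h (Suc q))"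
      using gp k g0 unfolding hg pcons_def by (cases q) auto
  qed
  ultimately show "h \<in> {h\<in>Hpaths M d A (Suc m) i j. Q (h 1)}"
    using g0 gm k unfolding Hpaths_def hg by (auto simp: pcons_def)
qed

lemma pcons_inj:
  "inj_on (pcons m i) (\<Union>k\<in>K. Hpaths M d A m k j)"
proof (rule inj_onI)
  fix g1 g2 assume g1: "g1 \<in> (\<Union>k\<in>K. Hpaths M d A m k j)" and g2: "g2 \<in> (\<Union>k\<in>K. Hpaths M d A m k j)"
    and eq: "pcons m i g1 = pcons m i g2"
  have e1: "g1 \<in> extensional {0..m}" and e2: "g2 \<in> extensional {0..m}"
    using g1 g2 by (auto simp: Hpaths_def PiE_def)
  show "g1 = g2"
  proof (rule extensionalityI[OF e1 e2])
    fix p assume "p \<in> {0..m}"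
    then have "pcons m i g1 (Suc p) = pcons m i g2 (Suc p)" using eq by simp
    then show "g1 p = g2 p" using \<open>p \<in> {0..m}\<close> by (simp add: pcons_def)
  qed
qed

lemma PS_step:
  assumes i: "i \<in> {1..d}"
  shows "(\<Sum>h\<in>{h\<in>Hpaths M d A (Suc m) i j. Q (h 1)}. \<Prod>p<Suc m. A (\<tau> - int p) \<omega> (h p) (h (Suc p)))
    = (\<Sum>k\<in>{k\<in>{1..d}. Q k}. Am M A \<tau> \<omega> i k *
         (\<Sum>g\<in>Hpaths M d A m k j. \<Prod>p<m. A (\<tau> - 1 - int p) \<omega> (g p) (g (Suc p))))"
proof -
  let ?K = "{k\<in>{1..d}. prec M A i k \<and> Q k}"
  let ?f = "\<lambda>h. \<Prod>p<Suc m. A (\<tau> - int p) \<omega> (h p) (h (Suc p))"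
  have "(\<Sum>h\<in>{h\<in>Hpaths M d A (Suc m) i j. Q (h 1)}. ?f h)
      = (\<Sum>g\<in>(\<Union>k\<in>?K. Hpaths M d A m k j). ?f (pcons m i g))"
    unfolding Hsplit[OF i] by (subst sum.reindex[OF pcons_inj]) simp
  also have "\<dots> = (\<Sum>k\<in>?K. \<Sum>g\<in>Hpaths M d A m k j. ?f (pcons m i g))"
    apply (rule sum.UNION_disjoint)
      apply simp
     apply (simp add: finite_Hpaths)
    apply (auto simp: Hpaths_def)
    done
  also have "\<dots> = (\<Sum>k\<in>?K. A \<tau> \<omega> i k * (\<Sum>g\<in>Hpaths M d A m k j. \<Prod>p<m. A (\<tau> - 1 - int p) \<omega> (g p) (g (Suc p))))"
  proof (rule sum.cong[OF refl])
    fix k assume k: "k \<in> ?K"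
    show "(\<Sum>g\<in>Hpaths M d A m k j. ?f (pcons m i g)) = A \<tau> \<omega> i k * (\<Sum>g\<in>Hpaths M d A m k j. \<Prod>p<m. A (\<tau> - 1 - int p) \<omega> (g p) (g (Suc p)))"
      unfolding sum_distrib_left
    proof (rule sum.cong[OF refl])
      fix g assume g: "g \<in> Hpaths M d A m k j"
      then have g0: "g 0 = k" by (simp add: Hpaths_def)
      have "?f (pcons m i g) = A \<tau> \<omega> (pcons m i g 0) (pcons m i g 1) *
          (\<Prod>p<m. A (\<tau> - int (Suc p)) \<omega> (pcons m i g (Suc p)) (pcons m i g (Suc (Suc p))))"
        by (subst prod.lessThan_Suc_shift) simp
      also have "\<dots> = A \<tau> \<omega> i k * (\<Prod>p<m. A (\<tau> - 1 - int p) \<omega> (g p) (g (Suc p)))"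
        by (intro arg_cong2[where f="(*)"] prod.cong) (auto simp: pcons_def g0 algebra_simps)
      finally show "?f (pcons m i g) = A \<tau> \<omega> i k * (\<Prod>p<m. A (\<tau> - 1 - int p) \<omega> (g p) (g (Suc p)))" .
    qed
  qed
  also have "\<dots> = (\<Sum>k\<in>{k\<in>{1..d}. Q k}. Am M A \<tau> \<omega> i k *
         (\<Sum>g\<in>Hpaths M d A m k j. \<Prod>p<m. A (\<tau> - 1 - int p) \<omega> (g p) (g (Suc p))))"
    by (rule sum.mono_neutral_cong_left) (auto simp: Am_def)
  finally show ?thesis .
qed

lemma PS_Rm:
  assumes "i \<in> {1..d}"
  shows "(\<Sum>h\<in>Hpaths M d A m i j. \<Prod>p<m. A (\<tau> - int p) \<omega> (h p) (h (Suc p))) = Rm M d A \<omega> \<tau> m i j"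
  using assms
proof (induction m arbitrary: \<tau> i)
  case 0
  show ?case
  proof (cases "i = j")
    case True
    have "Hpaths M d A 0 i j = {(\<lambda>p\<in>{0..0}. i)}"
      using 0 True by (auto simp: Hpaths_def PiE_def extensional_def fun_eq_iff)
    then show ?thesis using True by simp
  next
    case False
    then have "Hpaths M d A 0 i j = {}" by (auto simp: Hpaths_def)
    then show ?thesis using False by simp
  qed
next
  case (Suc m)
  have "(\<Sum>h\<in>Hpaths M d A (Suc m) i j. \<Prod>p<Suc m. A (\<tau> - int p) \<omega> (h p) (h (Suc p)))
     = (\<Sum>h\<in>{h\<in>Hpaths M d A (Suc m) i j. True}. \<Prod>p<Suc m. A (\<tau> - int p) \<omega> (h p) (h (Suc p)))" by simp
  also have "\<dots> = (\<Sum>k\<in>{k\<in>{1..d}. True}. Am M A \<tau> \<omega> i k *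
         (\<Sum>g\<in>Hpaths M d A m k j. \<Prod>p<m. A (\<tau> - 1 - int p) \<omega> (g p) (g (Suc p))))"
    by (rule PS_step[OF Suc.prems])
  also have "\<dots> = (\<Sum>k\<in>{1..d}. Am M A \<tau> \<omega> i k * Rm M d A \<omega> (\<tau> - 1) m k j)"
    by (intro sum.cong) (auto simp: Suc.IH)
  also have "\<dots> = Rm M d A \<omega> \<tau> (Suc m) i j"
    by simp
  finally show ?case .
qed

lemma pis_Rm:
  assumes "i \<in> {1..d}"
  shows "pis M d A i j s \<omega> = Rm M d A \<omega> 0 s i j"
proof -
  have "pis M d A i j s \<omega> = (\<Sum>h\<in>Hpaths M d A s i j. \<Prod>p<s. A (0 - int p) \<omega> (h p) (h (Suc p)))"
    by (simp add: pis_def)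
  then show ?thesis by (simp only: PS_Rm[OF assms])
qed

lemma sum_single:
  assumes "finite S" "a \<in> S" "\<And>k. k \<in> S - {a} \<Longrightarrow> f k = 0"
  shows "sum f S = f a"
proof -
  have "sum f S = f a + sum f (S - {a})" by (rule sum.remove[OF assms(1,2)])
  also have "sum f (S - {a}) = 0" by (rule sum.neutral) (use assms(3) in blast)
  finally show ?thesis by simp
qed

lemma pis'_Rm:
  assumes "i \<in> {1..d}"
  shows "pis' M d A i j n (Suc m) \<omega> =
    (\<Sum>k\<in>{k\<in>{1..d}. k \<noteq> i}. Am M A (- int n) \<omega> i k * Rm M d A \<omega> (- int n - 1) m k j)"
proof -
  have "pis' M d A i j n (Suc m) \<omega> = (\<Sum>h\<in>{h\<in>Hpaths M d A (Suc m) i j. h 1 \<noteq> i}.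
      \<Prod>p<Suc m. A (- int n - int p) \<omega> (h p) (h (Suc p)))"
    by (simp add: pis'_def Hpaths'_def)
  also have "\<dots> = (\<Sum>k\<in>{k\<in>{1..d}. k \<noteq> i}. Am M A (- int n) \<omega> i k *
         (\<Sum>g\<in>Hpaths M d A m k j. \<Prod>p<m. A (- int n - 1 - int p) \<omega> (g p) (g (Suc p))))"
    by (rule PS_step[OF assms, where Q="\<lambda>k. k \<noteq> i"])
  also have "\<dots> = (\<Sum>k\<in>{k\<in>{1..d}. k \<noteq> i}. Am M A (- int n) \<omega> i k * Rm M d A \<omega> (- int n - 1) m k j)"
    by (intro sum.cong refl) (simp add: PS_Rm)
  finally show ?thesis .
qed

lemma Rm_nz:
  assumes "i \<in> {1..d}" "Rm M d A \<omega> \<tau> m i j \<noteq> 0"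
  shows "j \<in> {1..d} \<and> trile M d A i j"
  using assms
proof (induction m arbitrary: \<tau> i)
  case 0
  then show ?case by (auto simp: trile_def split: if_splits)
next
  case (Suc m)
  then obtain k where k: "k \<in> {1..d}" "Am M A \<tau> \<omega> i k \<noteq> 0" "Rm M d A \<omega> (\<tau> - 1) m k j \<noteq> 0"
    by (auto elim: sum.not_neutral_contains_not_neutral)
  then have "prec M A i k" by (auto simp: Am_def split: if_splits)
  moreover have "j \<in> {1..d} \<and> trile M d A k j" using Suc.IH[OF k(1) k(3)] .
  ultimately show ?case using Suc.prems k(1)
    unfolding trile_def by (auto intro: converse_rtranclp_into_rtranclp)
qed

lemma Rm_tri:
  assumes U: "\<And>i j. i \<in> {1..d} \<Longrightarrow> j \<in> {1..d} \<Longrightarrow> prec M A i j \<Longrightarrow> i \<le> j"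
  assumes "i \<in> {1..d}" "Rm M d A \<omega> \<tau> m i j \<noteq> 0"
  shows "i \<le> j"
  using assms(2,3)
proof (induction m arbitrary: \<tau> i)
  case 0
  then show ?case by (auto split: if_splits)
next
  case (Suc m)
  then obtain k where k: "k \<in> {1..d}" "Am M A \<tau> \<omega> i k \<noteq> 0" "Rm M d A \<omega> (\<tau> - 1) m k j \<noteq> 0"
    by (auto elim: sum.not_neutral_contains_not_neutral)
  then have "prec M A i k" by (auto simp: Am_def split: if_splits)
  then have "i \<le> k" using U Suc.prems k(1) by blast
  with Suc.IH[OF k(1) k(3)] show ?case by simp
qed

lemma Am_eq:
  assumes Z: "\<And>t i j. i \<in> {1..d} \<Longrightarrow> j \<in> {1..d} \<Longrightarrow> \<not> prec M A i j \<Longrightarrow> A t \<omega> i j = 0"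
  shows "i \<in> {1..d} \<Longrightarrow> j \<in> {1..d} \<Longrightarrow> Am M A t \<omega> i j = A t \<omega> i j"
  using Z by (auto simp: Am_def)

lemma Rm_diag:
  assumes U: "\<And>i j. i \<in> {1..d} \<Longrightarrow> j \<in> {1..d} \<Longrightarrow> prec M A i j \<Longrightarrow> i \<le> j"
  assumes Z: "\<And>t i j. i \<in> {1..d} \<Longrightarrow> j \<in> {1..d} \<Longrightarrow> \<not> prec M A i j \<Longrightarrow> A t \<omega> i j = 0"
  assumes l: "l \<in> {1..d}"
  shows "Rm M d A \<omega> \<tau> m l l = (\<Prod>p<m. A (\<tau> - int p) \<omega> l l)"
proof (induction m arbitrary: \<tau>)
  case 0
  then show ?case by simp
next
  case (Suc m)
  have "Rm M d A \<omega> \<tau> (Suc m) l l = (\<Sum>k\<in>{1..d}. Am M A \<tau> \<omega> l k * Rm M d A \<omega> (\<tau> - 1) m k l)" by simp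
  also have "\<dots> = Am M A \<tau> \<omega> l l * Rm M d A \<omega> (\<tau> - 1) m l l"
  proof (rule sum_single[OF _ l])
    fix k assume k: "k \<in> {1..d} - {l}"
    show "Am M A \<tau> \<omega> l k * Rm M d A \<omega> (\<tau> - 1) m k l = 0"
    proof (cases "k < l")
      case True
      have "\<not> prec M A l k"
      proof
        assume "prec M A l k"
        then have "l \<le> k" using U[of l k] l k by simp
        then show False using True by simp
      qed
      then show ?thesis by (simp add: Am_def)
    next
      case False
      then have "\<not> k \<le> l" using k by auto
      have kd: "k \<in> {1..d}" using k by simp
      have "Rm M d A \<omega> (\<tau> - 1) m k l = 0"
      proof (rule ccontr)
        assume "Rm M d A \<omega> (\<tau> - 1) m k l \<noteq> 0"
        then have "k \<le> l" using Rm_tri[where M=M and A=A and d=d, OF U kd] by blast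
        then show False using \<open>\<not> k \<le> l\<close> by simp
      qed
      then show ?thesis by simp
    qed
  qed simp
  also have "\<dots> = A \<tau> \<omega> l l * (\<Prod>p<m. A (\<tau> - 1 - int p) \<omega> l l)"
    using Suc.IH Am_eq[where M=M and A=A and d=d and \<omega>=\<omega>, OF Z l l] by simp
  also have "\<dots> = (\<Prod>p<Suc m. A (\<tau> - int p) \<omega> l l)"
    by (subst prod.lessThan_Suc_shift) (simp add: algebra_simps)
  finally show ?case .
qed

lemma Rm_last:
  assumes "i \<in> {1..d}" "j \<in> {1..d}"
  shows "Rm M d A \<omega> \<tau> (Suc m) i j = (\<Sum>k\<in>{1..d}. Rm M d A \<omega> \<tau> m i k * Am M A (\<tau> - int m) \<omega> k j)"
  using assms(1)
proof (induction m arbitrary: \<tau> i)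
  case 0
  have "(\<Sum>k\<in>{1..d}. Am M A \<tau> \<omega> i k * (if k = j then 1 else 0)) = Am M A \<tau> \<omega> i j"
    using assms(2) by (simp add: if_distrib cong: if_cong)
  moreover have "(\<Sum>k\<in>{1..d}. (if i = k then 1 else 0) * Am M A \<tau> \<omega> k j) = Am M A \<tau> \<omega> i j"
    using 0 by (subst sum_single[where a=i]) auto
  ultimately show ?case by simp
next
  case (Suc m)
  have "Rm M d A \<omega> \<tau> (Suc (Suc m)) i j = (\<Sum>k\<in>{1..d}. Am M A \<tau> \<omega> i k * Rm M d A \<omega> (\<tau> - 1) (Suc m) k j)"
    by simp
  also have "\<dots> = (\<Sum>k\<in>{1..d}. Am M A \<tau> \<omega> i k * (\<Sum>k'\<in>{1..d}. Rm M d A \<omega> (\<tau> - 1) m k k' * Am M A (\<tau> - 1 - int m) \<omega> k' j))"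
  proof (intro sum.cong refl)
    fix k assume k: "k \<in> {1..d}"
    show "Am M A \<tau> \<omega> i k * Rm M d A \<omega> (\<tau> - 1) (Suc m) k j = Am M A \<tau> \<omega> i k * (\<Sum>k'\<in>{1..d}. Rm M d A \<omega> (\<tau> - 1) m k k' * Am M A (\<tau> - 1 - int m) \<omega> k' j)"
      by (simp only: Suc.IH[of k "\<tau> - 1", OF k])
  qed
  also have "\<dots> = (\<Sum>k'\<in>{1..d}. (\<Sum>k\<in>{1..d}. Am M A \<tau> \<omega> i k * Rm M d A \<omega> (\<tau> - 1) m k k') * Am M A (\<tau> - 1 - int m) \<omega> k' j)"
    by (simp add: sum_distrib_left sum_distrib_right mult.assoc) (rule sum.swap)
  also have "\<dots> = (\<Sum>k'\<in>{1..d}. Rm M d A \<omega> \<tau> (Suc m) i k' * Am M A (\<tau> - int (Suc m)) \<omega> k' j)"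
    by (simp add: algebra_simps)
  finally show ?case .
qed

lemma Rm_leave:
  assumes Z: "\<And>t i j. i \<in> {1..d} \<Longrightarrow> j \<in> {1..d} \<Longrightarrow> \<not> prec M A i j \<Longrightarrow> A t \<omega> i j = 0"
  assumes l: "l \<in> {1..d}" and jl: "j \<noteq> l"
  shows "Rm M d A \<omega> (- int n) s l j =
    (\<Sum>q<s. (\<Prod>p<q. A (- int n - int p) \<omega> l l) * pis' M d A l j (n + q) (s - q) \<omega>)"
proof (induction s arbitrary: n)
  case 0
  then show ?case using jl by simp
next
  case (Suc s)
  have fin: "finite {1..d}" by simp
  have "Rm M d A \<omega> (- int n) (Suc s) l j = (\<Sum>k\<in>{1..d}. Am M A (- int n) \<omega> l k * Rm M d A \<omega> (- int n - 1) s k j)"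
    by simp
  also have "\<dots> = Am M A (- int n) \<omega> l l * Rm M d A \<omega> (- int n - 1) s l j
      + (\<Sum>k\<in>{1..d} - {l}. Am M A (- int n) \<omega> l k * Rm M d A \<omega> (- int n - 1) s k j)"
    by (rule sum.remove[OF fin l])
  also have "{1..d} - {l} = {k\<in>{1..d}. k \<noteq> l}" by auto
  also have "(\<Sum>k\<in>{k\<in>{1..d}. k \<noteq> l}. Am M A (- int n) \<omega> l k * Rm M d A \<omega> (- int n - 1) s k j)
      = pis' M d A l j n (Suc s) \<omega>"
    by (rule pis'_Rm[OF l, symmetric])
  also have "Am M A (- int n) \<omega> l l = A (- int n) \<omega> l l"
    by (rule Am_eq[where M=M and A=A and d=d and \<omega>=\<omega>, OF Z l l])
  also have "- int n - 1 = - int (Suc n)" by simp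
  also have "Rm M d A \<omega> (- int (Suc n)) s l j =
    (\<Sum>q<s. (\<Prod>p<q. A (- int (Suc n) - int p) \<omega> l l) * pis' M d A l j (Suc n + q) (s - q) \<omega>)"
    by (rule Suc.IH)
  also have "A (- int n) \<omega> l l * (\<Sum>q<s. (\<Prod>p<q. A (- int (Suc n) - int p) \<omega> l l) * pis' M d A l j (Suc n + q) (s - q) \<omega>)
     + pis' M d A l j n (Suc s) \<omega>
     = (\<Sum>q<Suc s. (\<Prod>p<q. A (- int n - int p) \<omega> l l) * pis' M d A l j (n + q) (Suc s - q) \<omega>)"
  proof -
    have "(\<Sum>q<Suc s. (\<Prod>p<q. A (- int n - int p) \<omega> l l) * pis' M d A l j (n + q) (Suc s - q) \<omega>)
      = pis' M d A l j n (Suc s) \<omega> + (\<Sum>q<s. (\<Prod>p<Suc q. A (- int n - int p) \<omega> l l) * pis' M d A l j (n + Suc q) (Suc s - Suc q) \<omega>)"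
      by (subst sum.lessThan_Suc_shift) simp
    also have "(\<Sum>q<s. (\<Prod>p<Suc q. A (- int n - int p) \<omega> l l) * pis' M d A l j (n + Suc q) (Suc s - Suc q) \<omega>)
      = A (- int n) \<omega> l l * (\<Sum>q<s. (\<Prod>p<q. A (- int (Suc n) - int p) \<omega> l l) * pis' M d A l j (Suc n + q) (s - q) \<omega>)"
      unfolding sum_distrib_left
    proof (intro sum.cong refl)
      fix q
      have "(\<Prod>p<Suc q. A (- int n - int p) \<omega> l l) = A (- int n) \<omega> l l * (\<Prod>p<q. A (- int (Suc n) - int p) \<omega> l l)"
        apply (subst prod.lessThan_Suc_shift)
        apply (rule arg_cong2[where f="(*)"])
         apply simp
        apply (rule prod.cong)
         apply simp
        apply (rule arg_cong[where f="\<lambda>t. A t \<omega> l l"])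
        apply simp
        done
      then show "(\<Prod>p<Suc q. A (- int n - int p) \<omega> l l) * pis' M d A l j (n + Suc q) (Suc s - Suc q) \<omega>
         = A (- int n) \<omega> l l * ((\<Prod>p<q. A (- int (Suc n) - int p) \<omega> l l) * pis' M d A l j (Suc n + q) (s - q) \<omega>)"
        by simp
    qed
    finally show ?thesis by simp
  qed
  finally show ?case .
qed

lemma trile_le:
  assumes U: "\<And>i j. i \<in> {1..d} \<Longrightarrow> j \<in> {1..d} \<Longrightarrow> prec M A i j \<Longrightarrow> i \<le> j"
  assumes "trile M d A i j"
  shows "i \<le> j"
  using assms(2) unfolding trile_def
proof (induction rule: rtranclp_induct)
  case base
  then show ?case by simp
next
  case (step y z)
  then show ?case using U[of y z] by simp
qed

lemma QF_det:
  assumes U: "\<And>i j. i \<in> {1..d} \<Longrightarrow> j \<in> {1..d} \<Longrightarrow> prec M A i j \<Longrightarrow> i \<le> j"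
  assumes Z: "\<And>t i j. i \<in> {1..d} \<Longrightarrow> j \<in> {1..d} \<Longrightarrow> \<not> prec M A i j \<Longrightarrow> A t \<omega> i j = 0"
  assumes l: "l \<in> {1..d}"
  assumes Rec: "\<And>t i. i \<in> {1..d} \<Longrightarrow> W t \<omega> i = (\<Sum>j\<in>{1..d}. A t \<omega> i j * W (t - 1) \<omega> j) + B t \<omega> i"
  shows "QF M d A B W l s \<omega> = QW M d A W l s \<omega> + QB M d A B l s \<omega>"
proof (induction s)
  case 0
  have "QW M d A W l 0 \<omega> = 0"
    unfolding QW_def
  proof (rule sum.neutral, intro ballI)
    fix j assume j: "j \<in> {j \<in> {1..d}. trilt M d A l j}"
    then show "pis M d A l j 0 \<omega> * W (- int 0) \<omega> j = 0"
      by (simp add: trilt_def pis_Rm[OF l])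
  qed
  then show ?case by (simp add: QF_def QB_def)
next
  case (Suc s)
  define T where "T = {j\<in>{1..d}. trilt M d A l j}"
  have finT: "finite T" unfolding T_def by simp
  have Tsub: "T \<subseteq> {1..d}" and lT: "l \<notin> T" unfolding T_def trilt_def by auto
  have memT: "k \<in> T \<longleftrightarrow> k \<in> {1..d} \<and> trile M d A l k \<and> l \<noteq> k" for k
    unfolding T_def trilt_def by auto
  have Pd: "Rm M d A \<omega> 0 s l l = Pil A l s \<omega>"
    using Rm_diag[where M=M and A=A and d=d and \<omega>=\<omega>, OF U Z l, of 0 s] by (simp add: Pil_def)
  define WW where "WW k = W (- int s - 1) \<omega> k" for k
  define X where "X = (\<Sum>j\<in>T. Rm M d A \<omega> 0 s l j * (\<Sum>k\<in>T. Am M A (- int s) \<omega> j k * WW k))"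
  define Y where "Y = (\<Sum>k\<in>T. Am M A (- int s) \<omega> l k * WW k)"
  define Bs where "Bs = (\<Sum>j\<in>T. Rm M d A \<omega> 0 s l j * B (- int s) \<omega> j)"
  have F1: "QF M d A B W l (Suc s) \<omega> = QF M d A B W l s \<omega> + Pil A l s \<omega> * Dl M d A B W l (- int s) \<omega>"
    by (simp add: QF_def)
  have F5: "Dl M d A B W l (- int s) \<omega> = Y + B (- int s) \<omega> l"
  proof -
    have "Y = (\<Sum>k\<in>{j\<in>{1..d}. prec M A l j \<and> l \<noteq> j}. A (- int s) \<omega> l k * W (- int s - 1) \<omega> k)"
      unfolding Y_def
    proof (rule sum.mono_neutral_cong_right[OF finT])
      show "{j \<in> {1..d}. prec M A l j \<and> l \<noteq> j} \<subseteq> T"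
        using l by (auto simp: memT trile_def)
      show "\<forall>i\<in>T - {j \<in> {1..d}. prec M A l j \<and> l \<noteq> j}. Am M A (- int s) \<omega> l i * WW i = 0"
        by (auto simp: memT Am_def)
      show "Am M A (- int s) \<omega> l x * WW x = A (- int s) \<omega> l x * W (- int s - 1) \<omega> x"
        if "x \<in> {j \<in> {1..d}. prec M A l j \<and> l \<noteq> j}" for x
        using that by (simp add: Am_def WW_def)
    qed
    then show ?thesis by (simp add: Dl_def)
  qed
  have F3: "QW M d A W l s \<omega> = X + Bs"
  proof -
    have inner: "(\<Sum>k\<in>T. Am M A (- int s) \<omega> j k * WW k) = (\<Sum>k\<in>{1..d}. A (- int s) \<omega> j k * W (- int s - 1) \<omega> k)"
      if j: "j \<in> T" for j
    proof (rule sum.mono_neutral_cong_left)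
      show "finite {1..d}" by simp
      show "T \<subseteq> {1..d}" by (rule Tsub)
      have jd: "j \<in> {1..d}" and tj: "trile M d A l j" and lj: "l \<noteq> j" using j by (auto simp: memT)
      have "l \<le> j" by (rule trile_le[where M=M and A=A and d=d, OF U tj])
      show "\<forall>i\<in>{1..d} - T. A (- int s) \<omega> j i * W (- int s - 1) \<omega> i = 0"
      proof
        fix k assume k: "k \<in> {1..d} - T"
        show "A (- int s) \<omega> j k * W (- int s - 1) \<omega> k = 0"
        proof (cases "prec M A j k")
          case True
          have kd: "k \<in> {1..d}" using k by simp
          have "j \<le> k" using U[of j k] jd kd True by simp
          moreover have "trile M d A l k" using tj True jd kd unfolding trile_def
            by (simp add: rtranclp.rtrancl_into_rtrancl)
          ultimately have "k \<in> T" using \<open>l \<le> j\<close> lj kd unfolding memT by simp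
          then show ?thesis using k by simp
        next
          case False
          have kd: "k \<in> {1..d}" using k by simp
          show ?thesis using Z[of j k] jd kd False by simp
        qed
      qed
      show "Am M A (- int s) \<omega> j x * WW x = A (- int s) \<omega> j x * W (- int s - 1) \<omega> x" if "x \<in> T" for x
      proof -
        have xd: "x \<in> {1..d}" using that Tsub by auto
        show ?thesis using Am_eq[where M=M and A=A and d=d and \<omega>=\<omega>, OF Z jd xd] by (simp add: WW_def)
      qed
    qed
    have "QW M d A W l s \<omega> = (\<Sum>j\<in>T. Rm M d A \<omega> 0 s l j * W (- int s) \<omega> j)"
      unfolding QW_def T_def[symmetric] using Tsub by (intro sum.cong refl) (auto simp: pis_Rm[OF l])
    also have "\<dots> = (\<Sum>j\<in>T. Rm M d A \<omega> 0 s l j * ((\<Sum>k\<in>T. Am M A (- int s) \<omega> j k * WW k) + B (- int s) \<omega> j))"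
    proof (intro sum.cong refl)
      fix j assume j: "j \<in> T"
      then have "j \<in> {1..d}" using Tsub by auto
      then show "Rm M d A \<omega> 0 s l j * W (- int s) \<omega> j = Rm M d A \<omega> 0 s l j * ((\<Sum>k\<in>T. Am M A (- int s) \<omega> j k * WW k) + B (- int s) \<omega> j)"
        using Rec[of j "- int s"] inner[OF j] by simp
    qed
    also have "\<dots> = X + Bs"
      by (simp add: X_def Bs_def distrib_left sum.distrib)
    finally show ?thesis .
  qed
  have F4: "QW M d A W l (Suc s) \<omega> = X + Pil A l s \<omega> * Y"
  proof -
    have col: "(\<Sum>j\<in>{1..d}. Rm M d A \<omega> 0 s l j * Am M A (- int s) \<omega> j k)
        = Pil A l s \<omega> * Am M A (- int s) \<omega> l k + (\<Sum>j\<in>T. Rm M d A \<omega> 0 s l j * Am M A (- int s) \<omega> j k)" for k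
    proof -
      have "(\<Sum>j\<in>{1..d}. Rm M d A \<omega> 0 s l j * Am M A (- int s) \<omega> j k)
          = (\<Sum>j\<in>insert l T. Rm M d A \<omega> 0 s l j * Am M A (- int s) \<omega> j k)"
      proof (rule sum.mono_neutral_cong_right)
        show "finite {1..d}" by simp
        show "insert l T \<subseteq> {1..d}" using l Tsub by auto
        show "\<forall>i\<in>{1..d} - insert l T. Rm M d A \<omega> 0 s l i * Am M A (- int s) \<omega> i k = 0"
        proof
          fix j assume j: "j \<in> {1..d} - insert l T"
          show "Rm M d A \<omega> 0 s l j * Am M A (- int s) \<omega> j k = 0"
          proof (rule ccontr)
            assume "Rm M d A \<omega> 0 s l j * Am M A (- int s) \<omega> j k \<noteq> 0"
            then have "Rm M d A \<omega> 0 s l j \<noteq> 0" by auto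
            then have "trile M d A l j" using Rm_nz[where M=M and A=A and d=d and \<omega>=\<omega>, OF l] by blast
            then show False using j by (auto simp: memT)
          qed
        qed
      qed simp
      also have "\<dots> = Rm M d A \<omega> 0 s l l * Am M A (- int s) \<omega> l k + (\<Sum>j\<in>T. Rm M d A \<omega> 0 s l j * Am M A (- int s) \<omega> j k)"
        by (rule sum.insert[OF finT lT])
      finally show ?thesis using Pd by simp
    qed
    have "QW M d A W l (Suc s) \<omega> = (\<Sum>k\<in>T. Rm M d A \<omega> 0 (Suc s) l k * WW k)"
      unfolding QW_def T_def[symmetric]
    proof (intro sum.cong refl)
      have eq: "- int (Suc s) = - int s - 1" by simp
      fix k show "pis M d A l k (Suc s) \<omega> * W (- int (Suc s)) \<omega> k = Rm M d A \<omega> 0 (Suc s) l k * WW k"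
        by (simp only: pis_Rm[OF l] WW_def eq)
    qed
    also have "\<dots> = (\<Sum>k\<in>T. (\<Sum>j\<in>{1..d}. Rm M d A \<omega> 0 s l j * Am M A (- int s) \<omega> j k) * WW k)"
    proof (intro sum.cong refl)
      fix k assume "k \<in> T"
      then have kd: "k \<in> {1..d}" using Tsub by auto
      have "Rm M d A \<omega> 0 (Suc s) l k = (\<Sum>j\<in>{1..d}. Rm M d A \<omega> 0 s l j * Am M A (- int s) \<omega> j k)"
        using Rm_last[where M=M and A=A and d=d and \<omega>=\<omega> and \<tau>=0 and m=s, OF l kd] by (simp only: diff_0)
      then show "Rm M d A \<omega> 0 (Suc s) l k * WW k = (\<Sum>j\<in>{1..d}. Rm M d A \<omega> 0 s l j * Am M A (- int s) \<omega> j k) * WW k"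
        by (simp only:)
    qed
    also have "\<dots> = (\<Sum>k\<in>T. Pil A l s \<omega> * Am M A (- int s) \<omega> l k * WW k
        + (\<Sum>j\<in>T. Rm M d A \<omega> 0 s l j * Am M A (- int s) \<omega> j k * WW k))"
      by (intro sum.cong refl) (simp only: col distrib_right sum_distrib_right)
    also have "\<dots> = Pil A l s \<omega> * Y + (\<Sum>k\<in>T. \<Sum>j\<in>T. Rm M d A \<omega> 0 s l j * Am M A (- int s) \<omega> j k * WW k)"
      by (simp add: sum.distrib Y_def sum_distrib_left mult.assoc)
    also have "(\<Sum>k\<in>T. \<Sum>j\<in>T. Rm M d A \<omega> 0 s l j * Am M A (- int s) \<omega> j k * WW k) = X"
      unfolding X_def by (subst sum.swap) (simp add: sum_distrib_left mult.assoc)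
    finally show ?thesis by simp
  qed
  have F2: "QB M d A B l (Suc s) \<omega> = QB M d A B l s \<omega> + Pil A l s \<omega> * B (- int s) \<omega> l + Bs"
  proof -
    define G where "G n m j = pis' M d A l j n m \<omega> * B (- int n - int m) \<omega> j" for n m j
    have step: "Pil A l n \<omega> * (B (- int n) \<omega> l + (\<Sum>j\<in>T. \<Sum>m\<in>{1..Suc s - n - 1}. G n m j))
       = Pil A l n \<omega> * (B (- int n) \<omega> l + (\<Sum>j\<in>T. \<Sum>m\<in>{1..s - n - 1}. G n m j))
         + (\<Sum>j\<in>T. Pil A l n \<omega> * pis' M d A l j n (s - n) \<omega> * B (- int s) \<omega> j)" if n: "n < s" for n
    proof -
      have e1: "{1..Suc s - n - 1} = insert (s - n) {1..s - n - 1}" using n by auto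
      have e2: "s - n \<notin> {1..s - n - 1}" by auto
      have e3: "- int n - int (s - n) = - int s" using n by simp
      have "(\<Sum>m\<in>{1..Suc s - n - 1}. G n m j) = G n (s - n) j + (\<Sum>m\<in>{1..s - n - 1}. G n m j)" for j
        unfolding e1 by (rule sum.insert) (use e2 in auto)
      then show ?thesis
        by (simp add: sum.distrib distrib_left sum_distrib_left G_def e3 mult.assoc algebra_simps)
    qed
    have "QB M d A B l (Suc s) \<omega> = (\<Sum>n<Suc s. Pil A l n \<omega> * (B (- int n) \<omega> l + (\<Sum>j\<in>T. \<Sum>m\<in>{1..Suc s - n - 1}. G n m j)))"
      by (simp add: QB_def T_def G_def)
    also have "\<dots> = (\<Sum>n<s. Pil A l n \<omega> * (B (- int n) \<omega> l + (\<Sum>j\<in>T. \<Sum>m\<in>{1..Suc s - n - 1}. G n m j)))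
        + Pil A l s \<omega> * B (- int s) \<omega> l"
      by simp
    also have "(\<Sum>n<s. Pil A l n \<omega> * (B (- int n) \<omega> l + (\<Sum>j\<in>T. \<Sum>m\<in>{1..Suc s - n - 1}. G n m j)))
        = QB M d A B l s \<omega> + (\<Sum>n<s. \<Sum>j\<in>T. Pil A l n \<omega> * pis' M d A l j n (s - n) \<omega> * B (- int s) \<omega> j)"
    proof -
      have "(\<Sum>n<s. Pil A l n \<omega> * (B (- int n) \<omega> l + (\<Sum>j\<in>T. \<Sum>m\<in>{1..Suc s - n - 1}. G n m j)))
        = (\<Sum>n<s. Pil A l n \<omega> * (B (- int n) \<omega> l + (\<Sum>j\<in>T. \<Sum>m\<in>{1..s - n - 1}. G n m j))
         + (\<Sum>j\<in>T. Pil A l n \<omega> * pis' M d A l j n (s - n) \<omega> * B (- int s) \<omega> j))"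
        by (rule sum.cong[OF refl]) (rule step, simp)
      also have "\<dots> = (\<Sum>n<s. Pil A l n \<omega> * (B (- int n) \<omega> l + (\<Sum>j\<in>T. \<Sum>m\<in>{1..s - n - 1}. G n m j)))
         + (\<Sum>n<s. \<Sum>j\<in>T. Pil A l n \<omega> * pis' M d A l j n (s - n) \<omega> * B (- int s) \<omega> j)"
        by (simp only: sum.distrib)
      also have "(\<Sum>n<s. Pil A l n \<omega> * (B (- int n) \<omega> l + (\<Sum>j\<in>T. \<Sum>m\<in>{1..s - n - 1}. G n m j)))
         = QB M d A B l s \<omega>"
        by (simp add: QB_def T_def G_def)
      finally show ?thesis .
    qed
    also have "(\<Sum>n<s. \<Sum>j\<in>T. Pil A l n \<omega> * pis' M d A l j n (s - n) \<omega> * B (- int s) \<omega> j) = Bs"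
    proof -
      have "(\<Sum>n<s. \<Sum>j\<in>T. Pil A l n \<omega> * pis' M d A l j n (s - n) \<omega> * B (- int s) \<omega> j)
         = (\<Sum>j\<in>T. (\<Sum>n<s. Pil A l n \<omega> * pis' M d A l j n (s - n) \<omega>) * B (- int s) \<omega> j)"
        by (subst sum.swap) (simp add: sum_distrib_right)
      also have "\<dots> = Bs" unfolding Bs_def
      proof (intro sum.cong refl)
        fix j assume "j \<in> T"
        then have jl: "j \<noteq> l" using lT by auto
        show "(\<Sum>n<s. Pil A l n \<omega> * pis' M d A l j n (s - n) \<omega>) * B (- int s) \<omega> j = Rm M d A \<omega> 0 s l j * B (- int s) \<omega> j"
          using Rm_leave[where M=M and A=A and d=d and \<omega>=\<omega>, OF Z l jl, of 0 s] by (simp add: Pil_def)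
      qed
      finally show ?thesis .
    qed
    finally show ?thesis by simp
  qed
  show ?case using Suc.IH F1 F2 F3 F4 F5 by (simp add: algebra_simps)
qed

abbreviation NN :: "nat \<Rightarrow> ((nat \<times> nat) + nat \<Rightarrow> real) measure" where
  "NN d \<equiv> PiM (idx d) (\<lambda>_. borel)"

lemma idx_Inl[simp]: "Inl (i, j) \<in> idx d \<longleftrightarrow> i \<in> {1..d} \<and> j \<in> {1..d}"
  by (auto simp: idx_def)

lemma idx_Inr[simp]: "Inr i \<in> idx d \<longleftrightarrow> i \<in> {1..d}"
  by (auto simp: idx_def)

lemma finite_idx: "finite (idx d)"
  by (simp add: idx_def)

lemma ABvec_Inl: "i \<in> {1..d} \<Longrightarrow> j \<in> {1..d} \<Longrightarrow> ABvec d A B t \<omega> (Inl (i, j)) = A t \<omega> i j"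
  by (simp add: ABvec_def)

lemma ABvec_Inr: "i \<in> {1..d} \<Longrightarrow> ABvec d A B t \<omega> (Inr i) = B t \<omega> i"
  by (simp add: ABvec_def)

lemma meas_AB:
  assumes P: "prob_space M" and iid: "iid_AB M d A B"
  shows "ABvec d A B t \<in> measurable M (NN d)"
proof -
  interpret prob_space M by (rule P)
  from iid have "indep_vars (\<lambda>_. NN d) (ABvec d A B) UNIV" by (simp add: iid_AB_def)
  then show ?thesis unfolding indep_vars_def by auto
qed

lemma meas_coord:
  assumes P: "prob_space M" and iid: "iid_AB M d A B" and k: "k \<in> idx d"
  shows "(\<lambda>\<omega>. ABvec d A B t \<omega> k) \<in> borel_measurable M"
  using measurable_compose[OF meas_AB[OF P iid] measurable_component_singleton[OF k]] by simp

lemma measA: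
  assumes P: "prob_space M" and iid: "iid_AB M d A B" and ij: "i \<in> {1..d}" "j \<in> {1..d}"
  shows "(\<lambda>\<omega>. A t \<omega> i j) \<in> borel_measurable M"
  using meas_coord[OF P iid, of "Inl (i, j)" t] ij by (simp add: ABvec_Inl)

lemma measB:
  assumes P: "prob_space M" and iid: "iid_AB M d A B" and i: "i \<in> {1..d}"
  shows "(\<lambda>\<omega>. B t \<omega> i) \<in> borel_measurable M"
  using meas_coord[OF P iid, of "Inr i" t] i by (simp add: ABvec_Inr)

lemma AE_transfer:
  assumes P: "prob_space M" and iid: "iid_AB M d A B"
    and Pm: "{x \<in> space (NN d). Q x} \<in> sets (NN d)"
    and ae: "AE \<omega> in M. Q (ABvec d A B 0 \<omega>)"
  shows "AE \<omega> in M. Q (ABvec d A B t \<omega>)"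
proof -
  have "AE x in distr M (NN d) (ABvec d A B 0). Q x"
    using ae by (subst AE_distr_iff[OF meas_AB[OF P iid] Pm])
  also have "distr M (NN d) (ABvec d A B 0) = distr M (NN d) (ABvec d A B t)"
    using iid unfolding iid_AB_def by metis
  finally show ?thesis
    by (subst (asm) AE_distr_iff[OF meas_AB[OF P iid] Pm])
qed

lemma AE_coord_nonneg:
  assumes P: "prob_space M" and iid: "iid_AB M d A B" and cT: "condT M d A B \<alpha>"
    and k: "k \<in> idx d"
  shows "AE \<omega> in M. 0 \<le> ABvec d A B t \<omega> k"
proof (rule AE_transfer[OF P iid])
  show "{x \<in> space (NN d). 0 \<le> x k} \<in> sets (NN d)"
    using k by measurable
  have "AE \<omega> in M. \<forall>i\<in>{1..d}. B 0 \<omega> i \<ge> 0 \<and> (\<forall>j\<in>{1..d}. A 0 \<omega> i j \<ge> 0)"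
    using cT by (simp add: condT_def)
  then show "AE \<omega> in M. 0 \<le> ABvec d A B 0 \<omega> k"
  proof (rule AE_mp[OF _ AE_I2], intro impI)
    fix \<omega> assume h: "\<forall>i\<in>{1..d}. B 0 \<omega> i \<ge> 0 \<and> (\<forall>j\<in>{1..d}. A 0 \<omega> i j \<ge> 0)"
    show "0 \<le> ABvec d A B 0 \<omega> k"
      using k h by (auto simp: idx_def ABvec_Inl ABvec_Inr)
  qed
qed

lemma AE_Z:
  assumes P: "prob_space M" and iid: "iid_AB M d A B" and cT: "condT M d A B \<alpha>"
    and ij: "i \<in> {1..d}" "j \<in> {1..d}" and np: "\<not> prec M A i j"
  shows "AE \<omega> in M. A t \<omega> i j = 0"
proof -
  interpret prob_space M by (rule P)
  have k: "Inl (i, j) \<in> idx d" using ij by simp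
  have "AE \<omega> in M. ABvec d A B t \<omega> (Inl (i, j)) = 0"
  proof (rule AE_transfer[OF P iid])
    show "{x \<in> space (NN d). x (Inl (i, j)) = 0} \<in> sets (NN d)"
      using k by measurable
    let ?S = "{\<omega> \<in> space M. A 0 \<omega> i j > 0}"
    have Sm: "?S \<in> sets M" using measA[OF P iid ij, of 0] by measurable
    have "measure M ?S = 0" using np measure_nonneg[of M ?S] by (simp add: prec_def)
    then have "?S \<in> null_sets M" using Sm by (simp add: emeasure_eq_measure null_sets_def)
    then have "AE \<omega> in M. \<not> A 0 \<omega> i j > 0" by (rule AE_I') auto
    moreover have "AE \<omega> in M. 0 \<le> ABvec d A B 0 \<omega> (Inl (i, j))"
      by (rule AE_coord_nonneg[OF P iid cT k])
    ultimately show "AE \<omega> in M. ABvec d A B 0 \<omega> (Inl (i, j)) = 0"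
      by eventually_elim (use ij in \<open>simp add: ABvec_Inl\<close>)
  qed
  then show ?thesis by eventually_elim (use ij in \<open>simp add: ABvec_Inl\<close>)
qed

lemma prec_U:
  assumes P: "prob_space M" and iid: "iid_AB M d A B" and cT: "condT M d A B \<alpha>"
    and ij: "i \<in> {1..d}" "j \<in> {1..d}" and p: "prec M A i j"
  shows "i \<le> j"
proof (rule ccontr)
  interpret prob_space M by (rule P)
  assume "\<not> i \<le> j"
  then have "i > j" by simp
  then have m1: "measure M {\<omega>\<in>space M. A 0 \<omega> i j = 0} = 1" using cT ij by (simp add: condT_def)
  have Zm: "{\<omega>\<in>space M. A 0 \<omega> i j = 0} \<in> sets M" using measA[OF P iid ij, of 0] by measurable
  have "{\<omega>\<in>space M. A 0 \<omega> i j > 0} \<subseteq> space M - {\<omega>\<in>space M. A 0 \<omega> i j = 0}" by auto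
  then have "measure M {\<omega>\<in>space M. A 0 \<omega> i j > 0} \<le> measure M (space M - {\<omega>\<in>space M. A 0 \<omega> i j = 0})"
    by (intro finite_measure_mono) (use Zm in auto)
  also have "\<dots> = 0" using prob_compl[OF Zm] m1 by simp
  finally show False using p by (simp add: prec_def)
qed

lemma part1:
  assumes P: "prob_space M" and iid: "iid_AB M d A B" and cT: "condT M d A B \<alpha>"
    and rec: "\<And>t. AE \<omega> in M. \<forall>i\<in>{1..d}. W t \<omega> i = (\<Sum>j\<in>{1..d}. A t \<omega> i j * W (t - 1) \<omega> j) + B t \<omega> i"
    and l: "l \<in> {1..d}"
  shows "AE \<omega> in M. QF M d A B W l s \<omega> = QW M d A W l s \<omega> + QB M d A B l s \<omega>"
proof -
  have U: "\<And>i j. i \<in> {1..d} \<Longrightarrow> j \<in> {1..d} \<Longrightarrow> prec M A i j \<Longrightarrow> i \<le> j"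
    using prec_U[OF P iid cT] by blast
  have Z1: "AE \<omega> in M. (i \<in> {1..d} \<and> j \<in> {1..d} \<and> \<not> prec M A i j) \<longrightarrow> A t \<omega> i j = 0" for t i j
  proof (cases "i \<in> {1..d} \<and> j \<in> {1..d} \<and> \<not> prec M A i j")
    case True
    then have "AE \<omega> in M. A t \<omega> i j = 0" using AE_Z[OF P iid cT] by blast
    then show ?thesis by eventually_elim simp
  next
    case False
    show ?thesis by (rule AE_I2) (use False in blast)
  qed
  have Z: "AE \<omega> in M. \<forall>t i j. (i \<in> {1..d} \<and> j \<in> {1..d} \<and> \<not> prec M A i j) \<longrightarrow> A t \<omega> i j = 0"
    unfolding AE_all_countable using Z1 by blast
  have R: "AE \<omega> in M. \<forall>t. \<forall>i\<in>{1..d}. W t \<omega> i = (\<Sum>j\<in>{1..d}. A t \<omega> i j * W (t - 1) \<omega> j) + B t \<omega> i"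
    unfolding AE_all_countable using rec by blast
  from Z R show ?thesis
  proof eventually_elim
    case (elim \<omega>)
    show ?case
    proof (rule QF_det[OF U _ l])
      show "\<And>t i j. i \<in> {1..d} \<Longrightarrow> j \<in> {1..d} \<Longrightarrow> \<not> prec M A i j \<Longrightarrow> A t \<omega> i j = 0"
        using elim(1) by blast
      show "\<And>t i. i \<in> {1..d} \<Longrightarrow> W t \<omega> i = (\<Sum>j\<in>{1..d}. A t \<omega> i j * W (t - 1) \<omega> j) + B t \<omega> i"
        using elim(2) by blast
    qed
  qed
qed

definition goodf :: "'a measure \<Rightarrow> real \<Rightarrow> ('a \<Rightarrow> real) \<Rightarrow> bool" where
  "goodf M a f \<longleftrightarrow> f \<in> borel_measurable M \<and> (AE \<omega> in M. 0 \<le> f \<omega>) \<and> (\<integral>\<^sup>+\<omega>. ennreal (f \<omega> powr a) \<partial>M) < \<infinity>"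

lemma powr_add_le:
  fixes x y a :: real
  assumes "0 \<le> x" "0 \<le> y" "0 < a"
  shows "(x + y) powr a \<le> 2 powr a * (x powr a + y powr a)"
proof -
  have m: "(x + y) powr a \<le> (2 * max x y) powr a"
    using assms by (intro powr_mono2) auto
  also have "\<dots> = 2 powr a * max x y powr a"
    using assms by (simp add: powr_mult)
  also have "max x y powr a \<le> x powr a + y powr a"
    by (cases "x \<le> y") (auto simp: max_def)
  then have "2 powr a * max x y powr a \<le> 2 powr a * (x powr a + y powr a)"
    by (intro mult_left_mono) auto
  finally show ?thesis .
qed

lemma goodf_add:
  assumes a: "0 < a" and f: "goodf M a f" and g: "goodf M a g"
  shows "goodf M a (\<lambda>\<omega>. f \<omega> + g \<omega>)"
proof -
  have fm[measurable]: "f \<in> borel_measurable M" and gm[measurable]: "g \<in> borel_measurable M"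
    using f g by (auto simp: goodf_def)
  have fa: "AE \<omega> in M. 0 \<le> f \<omega>" and ga: "AE \<omega> in M. 0 \<le> g \<omega>" using f g by (auto simp: goodf_def)
  have "(\<integral>\<^sup>+\<omega>. ennreal ((f \<omega> + g \<omega>) powr a) \<partial>M)
      \<le> (\<integral>\<^sup>+\<omega>. ennreal (2 powr a) * (ennreal (f \<omega> powr a) + ennreal (g \<omega> powr a)) \<partial>M)"
  proof (rule nn_integral_mono_AE)
    show "AE \<omega> in M. ennreal ((f \<omega> + g \<omega>) powr a) \<le> ennreal (2 powr a) * (ennreal (f \<omega> powr a) + ennreal (g \<omega> powr a))"
      using fa ga
    proof eventually_elim
      case (elim \<omega>)
      have "ennreal ((f \<omega> + g \<omega>) powr a) \<le> ennreal (2 powr a * (f \<omega> powr a + g \<omega> powr a))"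
        by (rule ennreal_leI, rule powr_add_le) (use elim a in auto)
      also have "\<dots> = ennreal (2 powr a) * (ennreal (f \<omega> powr a) + ennreal (g \<omega> powr a))"
        by (simp add: ennreal_mult ennreal_plus)
      finally show ?case .
    qed
  qed
  also have "\<dots> = ennreal (2 powr a) * ((\<integral>\<^sup>+\<omega>. ennreal (f \<omega> powr a) \<partial>M) + (\<integral>\<^sup>+\<omega>. ennreal (g \<omega> powr a) \<partial>M))"
    by (subst nn_integral_cmult) (auto simp: nn_integral_add)
  also have "\<dots> < \<infinity>"
    using f g by (simp add: goodf_def ennreal_mult_less_top)
  finally have "(\<integral>\<^sup>+\<omega>. ennreal ((f \<omega> + g \<omega>) powr a) \<partial>M) < \<infinity>" .
  moreover have "AE \<omega> in M. 0 \<le> f \<omega> + g \<omega>" using fa ga by eventually_elim simp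
  ultimately show ?thesis by (simp add: goodf_def)
qed

lemma goodf_zero: "goodf M a (\<lambda>\<omega>. 0)"
  by (simp add: goodf_def)

lemma goodf_sum:
  assumes a: "0 < a" and K: "finite K" and f: "\<And>k. k \<in> K \<Longrightarrow> goodf M a (f k)"
  shows "goodf M a (\<lambda>\<omega>. \<Sum>k\<in>K. f k \<omega>)"
  using K f
proof (induction K rule: finite_induct)
  case empty
  then show ?case by (simp add: goodf_zero)
next
  case (insert x F)
  then show ?case using goodf_add[OF a, of M "f x" "\<lambda>\<omega>. \<Sum>k\<in>F. f k \<omega>"] by simp
qed

lemma powr_le_1_plus:
  fixes x a b :: real
  assumes "0 \<le> x" "0 < a" "a \<le> b"
  shows "x powr a \<le> 1 + x powr b"
proof (cases "x \<le> 1")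
  case True
  then have "x powr a \<le> 1 powr a" using assms by (intro powr_mono2) auto
  then have "x powr a \<le> 1" by simp
  then show ?thesis using powr_ge_zero[of x b] by linarith
next
  case False
  then have "x powr a \<le> x powr b" using assms by (intro powr_mono) auto
  then show ?thesis by simp
qed

lemma mom_bound:
  assumes P: "prob_space M" and fm: "f \<in> borel_measurable M" and nn: "AE \<omega> in M. 0 \<le> f \<omega>"
    and a: "0 < a" "a \<le> b" and fin: "(\<integral>\<^sup>+\<omega>. ennreal (f \<omega> powr b) \<partial>M) < \<infinity>"
  shows "(\<integral>\<^sup>+\<omega>. ennreal (f \<omega> powr a) \<partial>M) < \<infinity>"
proof -
  interpret prob_space M by (rule P)
  have [measurable]: "f \<in> borel_measurable M" by (rule fm)
  have "(\<integral>\<^sup>+\<omega>. ennreal (f \<omega> powr a) \<partial>M) \<le> (\<integral>\<^sup>+\<omega>. 1 + ennreal (f \<omega> powr b) \<partial>M)"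
  proof (rule nn_integral_mono_AE)
    show "AE \<omega> in M. ennreal (f \<omega> powr a) \<le> 1 + ennreal (f \<omega> powr b)"
      using nn
    proof eventually_elim
      case (elim \<omega>)
      have "ennreal (f \<omega> powr a) \<le> ennreal (1 + f \<omega> powr b)"
        by (rule ennreal_leI, rule powr_le_1_plus) (use elim a in auto)
      then show ?case by (simp add: ennreal_plus)
    qed
  qed
  also have "\<dots> = 1 + (\<integral>\<^sup>+\<omega>. ennreal (f \<omega> powr b) \<partial>M)"
    by (subst nn_integral_add) (auto simp: emeasure_space_1)
  also have "\<dots> < \<infinity>" using fin by simp
  finally show ?thesis .
qed

lemma goodf_prod:
  assumes P: "prob_space M" and iid: "iid_AB M d A B" and cT: "condT M d A B \<alpha>"
    and S: "finite S" and \<kappa>: "\<And>\<tau>. \<tau> \<in> S \<Longrightarrow> \<kappa> \<tau> \<in> idx d"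
    and mom: "\<And>\<tau>. \<tau> \<in> S \<Longrightarrow> (\<integral>\<^sup>+\<omega>. ennreal (ABvec d A B 0 \<omega> (\<kappa> \<tau>) powr a) \<partial>M) < \<infinity>"
  shows "goodf M a (\<lambda>\<omega>. \<Prod>\<tau>\<in>S. ABvec d A B \<tau> \<omega> (\<kappa> \<tau>))"
proof -
  interpret prob_space M by (rule P)
  have cm[measurable]: "(\<lambda>\<omega>. ABvec d A B \<tau> \<omega> (\<kappa> \<tau>)) \<in> borel_measurable M" if "\<tau> \<in> S" for \<tau>
    by (rule meas_coord[OF P iid \<kappa>[OF that]])
  have meas: "(\<lambda>\<omega>. \<Prod>\<tau>\<in>S. ABvec d A B \<tau> \<omega> (\<kappa> \<tau>)) \<in> borel_measurable M"
    by (rule borel_measurable_prod) (rule cm)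
  have nn: "AE \<omega> in M. \<forall>\<tau>\<in>S. 0 \<le> ABvec d A B \<tau> \<omega> (\<kappa> \<tau>)"
    by (rule AE_finite_allI[OF S]) (rule AE_coord_nonneg[OF P iid cT \<kappa>])
  have nn2: "AE \<omega> in M. 0 \<le> (\<Prod>\<tau>\<in>S. ABvec d A B \<tau> \<omega> (\<kappa> \<tau>))"
    using nn by eventually_elim (simp add: prod_nonneg)
  define Y where "Y \<tau> x = ennreal (x (\<kappa> \<tau>) powr a)" for \<tau> and x :: "(nat \<times> nat) + nat \<Rightarrow> real"
  have Ym: "Y \<tau> \<in> borel_measurable (NN d)" if "\<tau> \<in> S" for \<tau>
    unfolding Y_def using \<kappa>[OF that] by measurable
  have ind0: "indep_vars (\<lambda>_. NN d) (ABvec d A B) UNIV" using iid by (simp add: iid_AB_def)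
  have ind: "indep_vars (\<lambda>_. borel) (\<lambda>\<tau> \<omega>. Y \<tau> (ABvec d A B \<tau> \<omega>)) S"
    by (rule indep_vars_compose2[OF indep_vars_subset[OF ind0]]) (auto intro: Ym)
  have "(\<integral>\<^sup>+\<omega>. ennreal ((\<Prod>\<tau>\<in>S. ABvec d A B \<tau> \<omega> (\<kappa> \<tau>)) powr a) \<partial>M)
      = (\<integral>\<^sup>+\<omega>. (\<Prod>\<tau>\<in>S. Y \<tau> (ABvec d A B \<tau> \<omega>)) \<partial>M)"
    by (intro nn_integral_cong) (simp add: Y_def prod_powr_distrib prod_ennreal)
  also have "\<dots> = (\<Prod>\<tau>\<in>S. \<integral>\<^sup>+\<omega>. Y \<tau> (ABvec d A B \<tau> \<omega>) \<partial>M)"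
    by (rule indep_vars_nn_integral[OF S ind]) simp
  also have "\<dots> = (\<Prod>\<tau>\<in>S. \<integral>\<^sup>+\<omega>. Y \<tau> (ABvec d A B 0 \<omega>) \<partial>M)"
  proof (rule prod.cong[OF refl])
    fix \<tau> assume \<tau>: "\<tau> \<in> S"
    have "(\<integral>\<^sup>+\<omega>. Y \<tau> (ABvec d A B \<tau> \<omega>) \<partial>M) = integral\<^sup>N (distr M (NN d) (ABvec d A B \<tau>)) (Y \<tau>)"
      by (rule nn_integral_distr[symmetric]) (use meas_AB[OF P iid] Ym[OF \<tau>] in auto)
    also have "distr M (NN d) (ABvec d A B \<tau>) = distr M (NN d) (ABvec d A B 0)"
      using iid unfolding iid_AB_def by metis
    also have "integral\<^sup>N (distr M (NN d) (ABvec d A B 0)) (Y \<tau>) = (\<integral>\<^sup>+\<omega>. Y \<tau> (ABvec d A B 0 \<omega>) \<partial>M)"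
      by (rule nn_integral_distr) (use meas_AB[OF P iid] Ym[OF \<tau>] in auto)
    finally show "(\<integral>\<^sup>+\<omega>. Y \<tau> (ABvec d A B \<tau> \<omega>) \<partial>M) = (\<integral>\<^sup>+\<omega>. Y \<tau> (ABvec d A B 0 \<omega>) \<partial>M)" .
  qed
  also have "\<dots> < \<infinity>"
  proof -
    have "\<forall>\<tau>\<in>S. (\<integral>\<^sup>+\<omega>. Y \<tau> (ABvec d A B 0 \<omega>) \<partial>M) \<noteq> top"
    proof
      fix \<tau> assume "\<tau> \<in> S"
      from mom[OF this] show "(\<integral>\<^sup>+\<omega>. Y \<tau> (ABvec d A B 0 \<omega>) \<partial>M) \<noteq> top"
        unfolding Y_def by (simp add: less_top)
    qed
    then have "(\<Prod>\<tau>\<in>S. \<integral>\<^sup>+\<omega>. Y \<tau> (ABvec d A B 0 \<omega>) \<partial>M) \<noteq> top"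
      by (simp add: ennreal_prod_eq_top)
    then show ?thesis by (simp add: less_top)
  qed
  finally show ?thesis using meas nn2 by (simp add: goodf_def)
qed

lemma goodf_prod_nat:
  assumes P: "prob_space M" and iid: "iid_AB M d A B" and cT: "condT M d A B \<alpha>"
    and \<kappa>: "\<And>t. t < N \<Longrightarrow> \<kappa> t \<in> idx d"
    and mom: "\<And>t. t < N \<Longrightarrow> (\<integral>\<^sup>+\<omega>. ennreal (ABvec d A B 0 \<omega> (\<kappa> t) powr a) \<partial>M) < \<infinity>"
  shows "goodf M a (\<lambda>\<omega>. \<Prod>t<N. ABvec d A B (- int t) \<omega> (\<kappa> t))"
proof -
  let ?g = "\<lambda>t::nat. - int t"
  let ?k = "\<lambda>\<tau>. \<kappa> (nat (- \<tau>))"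
  have inj: "inj_on ?g {..<N}" by (auto simp: inj_on_def)
  have "goodf M a (\<lambda>\<omega>. \<Prod>\<tau>\<in>?g ` {..<N}. ABvec d A B \<tau> \<omega> (?k \<tau>))"
  proof (rule goodf_prod[OF P iid cT])
    show "finite (?g ` {..<N})" by simp
    fix \<tau> assume "\<tau> \<in> ?g ` {..<N}"
    then obtain t where t: "t < N" "\<tau> = - int t" by auto
    then have e: "?k \<tau> = \<kappa> t" by simp
    show "?k \<tau> \<in> idx d" unfolding e by (rule \<kappa>[OF t(1)])
    show "(\<integral>\<^sup>+\<omega>. ennreal (ABvec d A B 0 \<omega> (?k \<tau>) powr a) \<partial>M) < \<infinity>" unfolding e by (rule mom[OF t(1)])
  qed
  moreover have "(\<lambda>\<omega>. \<Prod>\<tau>\<in>?g ` {..<N}. ABvec d A B \<tau> \<omega> (?k \<tau>)) = (\<lambda>\<omega>. \<Prod>t<N. ABvec d A B (- int t) \<omega> (\<kappa> t))"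
    by (subst prod.reindex[OF inj]) simp
  ultimately show ?thesis by simp
qed

lemma prod_split_nat: "(\<Prod>t<n + m. F t) = (\<Prod>t<n. F t) * (\<Prod>p<m. F (n + p))"
  for F :: "nat \<Rightarrow> real"
  by (induction m) (simp_all add: mult.assoc)

definition row :: "(nat \<times> nat) + nat \<Rightarrow> nat" where
  "row k = (case k of Inl (i, j) \<Rightarrow> i | Inr i \<Rightarrow> i)"

lemma mom_coord:
  assumes P: "prob_space M" and iid: "iid_AB M d A B" and cT: "condT M d A B \<alpha>"
    and k: "k \<in> idx d" and a: "0 < a" "a \<le> \<alpha> (row k)"
  shows "(\<integral>\<^sup>+\<omega>. ennreal (ABvec d A B 0 \<omega> k powr a) \<partial>M) < \<infinity>"
proof (rule mom_bound[OF P meas_coord[OF P iid k] AE_coord_nonneg[OF P iid cT k] a])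
  show "(\<integral>\<^sup>+\<omega>. ennreal (ABvec d A B 0 \<omega> k powr \<alpha> (row k)) \<partial>M) < \<infinity>"
  proof (cases k)
    case (Inl ij)
    then obtain i j where kk: "k = Inl (i, j)" by (cases ij) auto
    then have ij: "i \<in> {1..d}" "j \<in> {1..d}" using k by auto
    have "(\<integral>\<^sup>+ \<omega>. ennreal (A 0 \<omega> i j powr \<alpha> i) \<partial>M) < \<infinity>"
      using cT ij by (simp add: condT_def)
    then show ?thesis using ij by (simp add: kk row_def ABvec_Inl)
  next
    case (Inr i)
    then have i: "i \<in> {1..d}" using k by auto
    have "(\<integral>\<^sup>+ \<omega>. ennreal (B 0 \<omega> i powr \<alpha> i) \<partial>M) < \<infinity>"
      using cT i by (simp add: condT_def)
    then show ?thesis using i by (simp add: Inr row_def ABvec_Inr)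
  qed
qed

lemma goodf_mono:
  assumes P: "prob_space M" and iid: "iid_AB M d A B" and cT: "condT M d A B \<alpha>"
    and l: "l \<in> {1..d}" and a: "0 < a"
    and a\<alpha>: "\<And>i. i \<in> {1..d} \<Longrightarrow> trile M d A l i \<Longrightarrow> a \<le> \<alpha> i"
    and h: "\<And>p. p < m \<Longrightarrow> h p \<in> {1..d} \<and> trile M d A l (h p) \<and> h (Suc p) \<in> {1..d}"
    and j: "j \<in> {1..d}" "trile M d A l j"
  shows "goodf M a (\<lambda>\<omega>. Pil A l n \<omega> * (\<Prod>p<m. A (- int n - int p) \<omega> (h p) (h (Suc p))) * B (- int n - int m) \<omega> j)"
proof -
  define \<kappa> where "\<kappa> t = (if t < n then Inl (l, l) else if t < n + m then Inl (h (t - n), h (Suc (t - n))) else Inr j)" for t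
  have ll: "trile M d A l l" by (simp add: trile_def)
  have kid: "\<kappa> t \<in> idx d \<and> a \<le> \<alpha> (row (\<kappa> t))" if "t < Suc (n + m)" for t
  proof (cases "t < n")
    case True
    then show ?thesis using l a\<alpha>[OF l ll] by (simp add: \<kappa>_def row_def)
  next
    case False
    show ?thesis
    proof (cases "t < n + m")
      case True
      then have "t - n < m" using False by simp
      from h[OF this] show ?thesis using False True a\<alpha> by (simp add: \<kappa>_def row_def)
    next
      case False2: False
      then show ?thesis using False j a\<alpha>[OF j] by (simp add: \<kappa>_def row_def)
    qed
  qed
  have g: "goodf M a (\<lambda>\<omega>. \<Prod>t<Suc (n + m). ABvec d A B (- int t) \<omega> (\<kappa> t))"
  proof (rule goodf_prod_nat[OF P iid cT])
    fix t assume t: "t < Suc (n + m)"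
    show "\<kappa> t \<in> idx d" using kid[OF t] by simp
    show "(\<integral>\<^sup>+\<omega>. ennreal (ABvec d A B 0 \<omega> (\<kappa> t) powr a) \<partial>M) < \<infinity>"
      using kid[OF t] by (intro mom_coord[OF P iid cT] a) auto
  qed
  have eq: "(\<Prod>t<Suc (n + m). ABvec d A B (- int t) \<omega> (\<kappa> t)) =
     Pil A l n \<omega> * (\<Prod>p<m. A (- int n - int p) \<omega> (h p) (h (Suc p))) * B (- int n - int m) \<omega> j" for \<omega>
  proof -
    have "(\<Prod>t<Suc (n + m). ABvec d A B (- int t) \<omega> (\<kappa> t))
       = (\<Prod>t<n. ABvec d A B (- int t) \<omega> (\<kappa> t)) * (\<Prod>p<m. ABvec d A B (- int (n + p)) \<omega> (\<kappa> (n + p)))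
         * ABvec d A B (- int (n + m)) \<omega> (\<kappa> (n + m))"
      by (simp only: prod.lessThan_Suc prod_split_nat)
    also have "(\<Prod>t<n. ABvec d A B (- int t) \<omega> (\<kappa> t)) = Pil A l n \<omega>"
      unfolding Pil_def by (intro prod.cong refl) (simp add: \<kappa>_def ABvec_Inl[OF l l])
    also have "(\<Prod>p<m. ABvec d A B (- int (n + p)) \<omega> (\<kappa> (n + p))) = (\<Prod>p<m. A (- int n - int p) \<omega> (h p) (h (Suc p)))"
    proof (intro prod.cong refl)
      fix p assume "p \<in> {..<m}"
      then have p: "p < m" by simp
      have "\<kappa> (n + p) = Inl (h p, h (Suc p))" using p by (simp add: \<kappa>_def)
      then show "ABvec d A B (- int (n + p)) \<omega> (\<kappa> (n + p)) = A (- int n - int p) \<omega> (h p) (h (Suc p))"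
        using h[OF p] by (simp add: ABvec_Inl algebra_simps)
    qed
    also have "ABvec d A B (- int (n + m)) \<omega> (\<kappa> (n + m)) = B (- int n - int m) \<omega> j"
    proof -
      have "- int (n + m) = - int n - int m" by simp
      then show ?thesis by (simp add: \<kappa>_def ABvec_Inr[OF j(1)])
    qed
    finally show ?thesis .
  qed
  show ?thesis using g unfolding eq .
qed

lemma path_reach:
  assumes h: "h \<in> Hpaths M d A m i j"
  shows "p \<le> m \<Longrightarrow> trile M d A i (h p)"
proof (induction p)
  case 0
  then show ?case using h by (simp add: Hpaths_def trile_def)
next
  case (Suc p)
  have hE: "h \<in> {0..m} \<rightarrow>\<^sub>E {1..d}" and st: "prec M A (h p) (h (Suc p))"
    using h Suc.prems by (auto simp: Hpaths_def)
  have "h p \<in> {1..d}" "h (Suc p) \<in> {1..d}" using hE Suc.prems by auto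
  with Suc st show ?case unfolding trile_def by (simp add: rtranclp.rtrancl_into_rtrancl)
qed

lemma part2:
  assumes P: "prob_space M" and iid: "iid_AB M d A B" and cT: "condT M d A B \<alpha>"
    and l: "l \<in> {1..d}"
  shows "(\<integral>\<^sup>+ \<omega>. ennreal (QB M d A B l s \<omega> powr alpha_tilde M d A \<alpha> l) \<partial>M) < \<infinity>"
proof -
  define a where "a = alpha_tilde M d A \<alpha> l"
  define R where "R = {j\<in>{1..d}. trile M d A l j}"
  have finR: "finite (\<alpha> ` R)" unfolding R_def by simp
  have lR: "l \<in> R" using l by (simp add: R_def trile_def)
  have a\<alpha>: "a \<le> \<alpha> i" if "i \<in> {1..d}" "trile M d A l i" for i
    unfolding a_def alpha_tilde_def R_def[symmetric] using that by (intro Min_le finR) (auto simp: R_def)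
  have apos: "0 < a"
  proof -
    have "a \<in> \<alpha> ` R" unfolding a_def alpha_tilde_def R_def[symmetric] using finR lR by (intro Min_in) auto
    then obtain i where "i \<in> {1..d}" "a = \<alpha> i" by (auto simp: R_def)
    then show ?thesis using cT by (simp add: condT_def)
  qed
  define mono where "mono n m j h \<omega> = Pil A l n \<omega> * (\<Prod>p<m. A (- int n - int p) \<omega> (h p) (h (Suc p))) * B (- int n - int m) \<omega> j"
    for n m j and h :: "nat \<Rightarrow> nat" and \<omega>
  define T where "T = {j\<in>{1..d}. trilt M d A l j}"
  have gm: "goodf M a (mono n m j h)" if h: "\<And>p. p < m \<Longrightarrow> h p \<in> {1..d} \<and> trile M d A l (h p) \<and> h (Suc p) \<in> {1..d}"
    and j: "j \<in> {1..d}" "trile M d A l j" for n m j h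
    unfolding mono_def by (rule goodf_mono[where M=M and d=d and A=A and B=B and l=l and a=a and h=h and m=m and j=j and n=n, OF P iid cT l apos a\<alpha> h j])
  have eqQB: "QB M d A B l s \<omega> = (\<Sum>n<s. mono n 0 l (\<lambda>_. l) \<omega> +
     (\<Sum>j\<in>T. \<Sum>m\<in>{1..s - n - 1}. \<Sum>h\<in>Hpaths' M d A m l j. mono n m j h \<omega>))" for \<omega>
    unfolding QB_def T_def[symmetric]
  proof (intro sum.cong refl)
    fix n
    show "Pil A l n \<omega> * (B (- int n) \<omega> l + (\<Sum>j\<in>T. \<Sum>m = 1..s - n - 1. pis' M d A l j n m \<omega> * B (- int n - int m) \<omega> j))
      = mono n 0 l (\<lambda>_. l) \<omega> + (\<Sum>j\<in>T. \<Sum>m\<in>{1..s - n - 1}. \<Sum>h\<in>Hpaths' M d A m l j. mono n m j h \<omega>)"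
      by (simp add: mono_def pis'_def distrib_left sum_distrib_left sum_distrib_right mult.assoc)
  qed
  have "goodf M a (\<lambda>\<omega>. \<Sum>n<s. mono n 0 l (\<lambda>_. l) \<omega> +
     (\<Sum>j\<in>T. \<Sum>m\<in>{1..s - n - 1}. \<Sum>h\<in>Hpaths' M d A m l j. mono n m j h \<omega>))"
  proof (intro goodf_sum[OF apos] goodf_add[OF apos])
    fix n
    show "goodf M a (mono n 0 l (\<lambda>_. l))"
      by (rule gm) (use l lR in \<open>auto simp: R_def\<close>)
    fix j m h assume j: "j \<in> T" and h: "h \<in> Hpaths' M d A m l j"
    have hH: "h \<in> Hpaths M d A m l j" using h by (simp add: Hpaths'_def)
    have jd: "j \<in> {1..d}" "trile M d A l j" using j by (auto simp: T_def trilt_def)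
    show "goodf M a (mono n m j h)"
    proof (rule gm[OF _ jd])
      fix p assume p: "p < m"
      have hE: "h \<in> {0..m} \<rightarrow>\<^sub>E {1..d}" using hH by (simp add: Hpaths_def)
      show "h p \<in> {1..d} \<and> trile M d A l (h p) \<and> h (Suc p) \<in> {1..d}"
        using hE p path_reach[OF hH, of p] by auto
    qed
  qed (auto simp: T_def Hpaths'_def intro: finite_subset[OF _ finite_Hpaths])
  then have "goodf M a (QB M d A B l s)" unfolding eqQB[abs_def] by simp
  then show ?thesis by (simp add: goodf_def a_def)
qed

theorem lemma5p4:
  fixes M :: "'a measure" and d :: nat
    and A :: "int \<Rightarrow> 'a \<Rightarrow> nat \<Rightarrow> nat \<Rightarrow> real" and B :: "int \<Rightarrow> 'a \<Rightarrow> nat \<Rightarrow> real"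
    and W :: "int \<Rightarrow> 'a \<Rightarrow> nat \<Rightarrow> real" and \<alpha> :: "nat \<Rightarrow> real"
    and l s :: nat
  assumes "prob_space M"
    and "iid_AB M d A B"
    and "condT M d A B \<alpha>"
    and "\<And>t i. (\<lambda>\<omega>. W t \<omega> i) \<in> borel_measurable M"
    and "\<And>t. AE \<omega> in M. \<forall>i\<in>{1..d}. W t \<omega> i = (\<Sum>j\<in>{1..d}. A t \<omega> i j * W (t - 1) \<omega> j) + B t \<omega> i"
    and "stationary_proc M d W"
    and "l \<in> {1..d}"
  shows "(AE \<omega> in M. QF M d A B W l s \<omega> = QW M d A W l s \<omega> + QB M d A B l s \<omega>)
    \<and> (\<integral>\<^sup>+ \<omega>. ennreal (QB M d A B l s \<omega> powr alpha_tilde M d A \<alpha> l) \<partial>M) < \<infinity>"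
  using part1[OF assms(1,2,3,5,7)] part2[OF assms(1,2,3,7)] by blast

end
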